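(* Let $n>d\ge1$, let $X\in\mathbb{R}^{n\times d}$ with $X^\top X$ invertible, let $\theta^*\in\mathbb{R}^d$ with $\|\theta^*\|_2=1$, $y=X\theta^*$, and $\alpha\in\mathbb{R}\setminus\{0\}$. Let $q^{(0)}=\mathbf{0}_d$, $Z^{(0)}=\begin{bmatrix} X & y\\ q^{(0)\top} & \alpha\end{bmatrix}\in\mathbb{R}^{(n+1)\times(d+1)}$, $Q=I_{d+1}$, $P=\begin{bmatrix} I_{d} & \mathbf{0}_{d\times 1}\\ \mathbf{0}_{1\times d} & 0\end{bmatrix}$, let $T\ge1$ be the number of loops, and use step sizes $\eta^{(t)}=1/L$ for all $t$, where $L=\|X^\top X\|$ (spectral norm). Let $\kappa=\lambda_{\max}(X^\top X)/\lambda_{\min}(X^\top X)$. Then $$|\langle \mathsf{TF}(Z^{(0)};Q,P),\theta^*\rangle-\alpha|\le|\alpha|\cdot\exp\!\Big(-\frac{T}{2\kappa}\Big).$$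
   Context: For $Z\in\mathbb{R}^{(n+1)\times(d+1)}$ and $Q,P\in\mathbb{R}^{(d+1)\times(d+1)}$, the linear attention is $\mathsf{Attn}(Z;Q,P):=(M\circ(ZQZ^\top))ZP$, where $\circ$ is the entrywise (Hadamard) product and $M=\begin{bmatrix}\mathbf{0}_{n\times n} & \mathbf{0}_{n\times 1}\\ \mathbf{1}_{1\times n} & 0\end{bmatrix}\in\mathbb{R}^{(n+1)\times(n+1)}$. The linear looped transformer with loop number $T$ and step sizes $\eta^{(t)}>0$ is defined by $Z^{(t)}:=Z^{(t-1)}-\eta^{(t-1)}\mathsf{Attn}(Z^{(t-1)};Q,P)$ for $t\in\{1,\dots,T\}$, and $\mathsf{TF}(Z^{(0)};Q,P):=-\big(Z^{(T)}_{n+1,1:d}\big)^\top\in\mathbb{R}^d$, i.e. minus the first $d$ entries of the last row of $Z^{(T)}$. $\lambda_{\min},\lambda_{\max}$ denote the smallest and largest eigenvalues. *)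

theory Defs
  imports "Jordan_Normal_Form.Char_Poly"
begin

definition vnorm2 :: "real vec \<Rightarrow> real" where
  "vnorm2 v = sqrt (\<Sum>i<dim_vec v. (v $ i)^2)"

definition spec_norm :: "real mat \<Rightarrow> real" where
  "spec_norm A = Sup {vnorm2 (A *\<^sub>v v) | v. v \<in> carrier_vec (dim_col A) \<and> vnorm2 v = 1}"

definition lambda_max :: "real mat \<Rightarrow> real" where
  "lambda_max A = Max {k. eigenvalue A k}"

definition lambda_min :: "real mat \<Rightarrow> real" where
  "lambda_min A = Min {k. eigenvalue A k}"

definition hadamard :: "real mat \<Rightarrow> real mat \<Rightarrow> real mat" where
  "hadamard A B = mat (dim_row A) (dim_col A) (\<lambda>(i,j). A $$ (i,j) * B $$ (i,j))"

(* mask M in R^{(n+1)x(n+1)} (0-indexed): last row is [1 ... 1 0], rest 0;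
   here N = n+1 is the number of rows of Z *)
definition attn_mask :: "nat \<Rightarrow> real mat" where
  "attn_mask N = mat N N (\<lambda>(i,j). if i = N - 1 \<and> j < N - 1 then 1 else 0)"

definition Attn :: "real mat \<Rightarrow> real mat \<Rightarrow> real mat \<Rightarrow> real mat" where
  "Attn Z Q P = hadamard (attn_mask (dim_row Z)) (Z * Q * Z\<^sup>T) * Z * P"

fun loopZ :: "(nat \<Rightarrow> real) \<Rightarrow> real mat \<Rightarrow> real mat \<Rightarrow> real mat \<Rightarrow> nat \<Rightarrow> real mat" where
  "loopZ eta Q P Z0 0 = Z0"
| "loopZ eta Q P Z0 (Suc t) = loopZ eta Q P Z0 t - eta t \<cdot>\<^sub>m Attn (loopZ eta Q P Z0 t) Q P"

definition TF :: "(nat \<Rightarrow> real) \<Rightarrow> nat \<Rightarrow> real mat \<Rightarrow> real mat \<Rightarrow> real mat \<Rightarrow> real vec" where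
  "TF eta T Q P Z0 = (let ZT = loopZ eta Q P Z0 T in
     vec (dim_col Z0 - 1) (\<lambda>j. - ZT $$ (dim_row Z0 - 1, j)))"

end

theory Submission imports Defs "HOL-Analysis.Function_Topology" begin


lemma sphere_min_attain:
  fixes g :: "(nat \<Rightarrow> real) \<Rightarrow> real" and d :: nat
  assumes "d \<ge> 1" and g: "continuous_on UNIV g"
  shows "\<exists>f. (\<forall>i\<ge>d. f i = 0) \<and> (\<Sum>i<d. (f i)^2) = 1 \<and>
     (\<forall>h. (\<forall>i\<ge>d. h i = 0) \<and> (\<Sum>i<d. (h i)^2) = 1 \<longrightarrow> g f \<le> g h)"
proof -
  define K :: "(nat \<Rightarrow> real) set" where "K = Pi UNIV (\<lambda>i. if i < d then {-1..1} else {0})"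
  have "compactin (product_topology (\<lambda>i. euclidean) UNIV) (Pi\<^sub>E UNIV (\<lambda>i. if i < d then {-1..1::real} else {0}))"
    by (subst compactin_PiE) auto
  hence cK: "compact K" unfolding K_def euclidean_product_topology PiE_UNIV_domain
    by (simp add: compactin_euclidean_iff)
  define S where "S = K \<inter> {h. (\<Sum>i<d. (h i)^2) = 1}"
  have "closed {h :: nat \<Rightarrow> real. (\<Sum>i<d. (h i)^2) = 1}"
  proof (rule closed_Collect_eq)
    show "continuous_on UNIV (\<lambda>h :: nat \<Rightarrow> real. \<Sum>i<d. (h i)^2)"
      by (intro continuous_on_sum continuous_on_power continuous_on_product_coordinates)
  qed simp
  with cK have cS: "compact S" unfolding S_def by (rule compact_Int_closed)
  have Sdef: "h \<in> S \<longleftrightarrow> (\<forall>i\<ge>d. h i = 0) \<and> (\<Sum>i<d. (h i)^2) = 1" for h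
  proof
    assume "h \<in> S" thus "(\<forall>i\<ge>d. h i = 0) \<and> (\<Sum>i<d. (h i)^2) = 1"
      unfolding S_def K_def by (auto simp: Pi_def) (metis empty_iff insert_iff not_le)
  next
    assume a: "(\<forall>i\<ge>d. h i = 0) \<and> (\<Sum>i<d. (h i)^2) = 1"
    have "\<bar>h i\<bar> \<le> 1" if "i < d" for i
    proof -
      have "(h i)^2 \<le> (\<Sum>i<d. (h i)^2)"
        by (rule member_le_sum) (use that in auto)
      hence "(h i)^2 \<le> 1^2" using a by simp
      thus ?thesis using abs_le_square_iff[of "h i" 1] by simp
    qed
    thus "h \<in> S" using a unfolding S_def K_def by (auto simp: Pi_def abs_le_iff not_less)
  qed
  have "(\<lambda>i. if i = 0 then 1 else 0) \<in> S" using assms(1) unfolding Sdef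
    by (auto simp: sum.remove[of "{..<d}" 0] intro!: sum.neutral)
  hence "S \<noteq> {}" by auto
  from continuous_attains_inf[OF cS this continuous_on_subset[OF g]]
  obtain f where f1: "f \<in> S" and f2: "\<forall>y\<in>S. g f \<le> g y" by auto
  have "(\<forall>i\<ge>d. f i = 0) \<and> (\<Sum>i<d. (f i)^2) = 1" using f1 Sdef[of f] by blast
  moreover have "\<forall>h. (\<forall>i\<ge>d. h i = 0) \<and> (\<Sum>i<d. (h i)^2) = 1 \<longrightarrow> g f \<le> g h"
  proof (intro allI impI)
    fix h :: "nat \<Rightarrow> real" assume "(\<forall>i\<ge>d. h i = 0) \<and> (\<Sum>i<d. (h i)^2) = 1"
    hence "h \<in> S" using Sdef[of h] by blast
    thus "g f \<le> g h" using f2 by blast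
  qed
  ultimately show ?thesis by blast
qed

lemma sym_dot:
  fixes A :: "real mat"
  assumes A: "A \<in> carrier_mat d d" and s: "A\<^sup>T = A"
    and u: "u \<in> carrier_vec d" and w: "w \<in> carrier_vec d"
  shows "u \<bullet> (A *\<^sub>v w) = w \<bullet> (A *\<^sub>v u)"
proof -
  have "u \<bullet> (A *\<^sub>v w) = (A\<^sup>T *\<^sub>v u) \<bullet> w"
    using transpose_vec_mult_scalar[OF A w u] by simp
  also have "\<dots> = w \<bullet> (A *\<^sub>v u)" unfolding s
    by (rule comm_scalar_prod[of _ d]) (use A u w in auto)
  finally show ?thesis .
qed

lemma quad_expand:
  fixes A :: "real mat"
  assumes A: "A \<in> carrier_mat d d" and s: "A\<^sup>T = A"
    and u: "u \<in> carrier_vec d" and w: "w \<in> carrier_vec d"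
  shows "(u + t \<cdot>\<^sub>v w) \<bullet> (A *\<^sub>v (u + t \<cdot>\<^sub>v w))
     = u \<bullet> (A *\<^sub>v u) + 2 * t * (w \<bullet> (A *\<^sub>v u)) + t^2 * (w \<bullet> (A *\<^sub>v w))"
proof -
  have Au: "A *\<^sub>v u \<in> carrier_vec d" by (rule mult_mat_vec_carrier[OF A u])
  have Aw: "A *\<^sub>v w \<in> carrier_vec d" by (rule mult_mat_vec_carrier[OF A w])
  have tw: "t \<cdot>\<^sub>v w \<in> carrier_vec d" using w by simp
  have tAw: "t \<cdot>\<^sub>v (A *\<^sub>v w) \<in> carrier_vec d" using Aw by simp
  have S: "A *\<^sub>v u + t \<cdot>\<^sub>v (A *\<^sub>v w) \<in> carrier_vec d" using Au tAw by simp
  have e1: "A *\<^sub>v (u + t \<cdot>\<^sub>v w) = A *\<^sub>v u + t \<cdot>\<^sub>v (A *\<^sub>v w)"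
    using mult_add_distrib_mat_vec[OF A u tw] mult_mat_vec[OF A w, of t] by simp
  have "(u + t \<cdot>\<^sub>v w) \<bullet> (A *\<^sub>v u + t \<cdot>\<^sub>v (A *\<^sub>v w))
      = u \<bullet> (A *\<^sub>v u + t \<cdot>\<^sub>v (A *\<^sub>v w)) + (t \<cdot>\<^sub>v w) \<bullet> (A *\<^sub>v u + t \<cdot>\<^sub>v (A *\<^sub>v w))"
    by (rule add_scalar_prod_distrib[OF u tw S])
  also have "u \<bullet> (A *\<^sub>v u + t \<cdot>\<^sub>v (A *\<^sub>v w)) = u \<bullet> (A *\<^sub>v u) + u \<bullet> (t \<cdot>\<^sub>v (A *\<^sub>v w))"
    by (rule scalar_prod_add_distrib[OF u Au tAw])
  also have "(t \<cdot>\<^sub>v w) \<bullet> (A *\<^sub>v u + t \<cdot>\<^sub>v (A *\<^sub>v w)) = t * (w \<bullet> (A *\<^sub>v u + t \<cdot>\<^sub>v (A *\<^sub>v w)))"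
    by (rule smult_scalar_prod_distrib[OF w S])
  also have "w \<bullet> (A *\<^sub>v u + t \<cdot>\<^sub>v (A *\<^sub>v w)) = w \<bullet> (A *\<^sub>v u) + w \<bullet> (t \<cdot>\<^sub>v (A *\<^sub>v w))"
    by (rule scalar_prod_add_distrib[OF w Au tAw])
  also have "u \<bullet> (t \<cdot>\<^sub>v (A *\<^sub>v w)) = t * (u \<bullet> (A *\<^sub>v w))"
    by (rule scalar_prod_smult_distrib[OF u Aw])
  also have "w \<bullet> (t \<cdot>\<^sub>v (A *\<^sub>v w)) = t * (w \<bullet> (A *\<^sub>v w))"
    by (rule scalar_prod_smult_distrib[OF w Aw])
  also have "u \<bullet> (A *\<^sub>v w) = w \<bullet> (A *\<^sub>v u)" by (rule sym_dot[OF A s u w])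
  finally show ?thesis unfolding e1 by (simp add: power2_eq_square algebra_simps)
qed

lemma real_quad:
  fixes a b c :: real
  assumes h: "\<And>t. 0 \<le> a + 2 * b * t + c * t^2" and c: "c \<ge> 0"
  shows "b^2 \<le> a * c"
proof (cases "c = 0")
  case True
  have "b = 0"
  proof (rule ccontr)
    assume "b \<noteq> 0"
    have "0 \<le> a + 2 * b * (- (\<bar>a\<bar> + 1) / (2 * b))" using h[of "- (\<bar>a\<bar> + 1) / (2 * b)"] True by simp
    also have "\<dots> = a - (\<bar>a\<bar> + 1)" using \<open>b \<noteq> 0\<close> by (simp add: field_simps)
    finally show False by linarith
  qed
  thus ?thesis using True by simp
next
  case False
  hence cp: "c > 0" using c by simp
  have "0 \<le> a + 2 * b * (- b / c) + c * (- b / c)^2" by (rule h)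
  also have "\<dots> = a - b^2 / c" using cp by (simp add: field_simps power2_eq_square)
  finally have "b^2 / c \<le> a" by simp
  thus ?thesis using cp by (simp add: field_simps mult.commute)
qed

definition psd :: "real mat \<Rightarrow> nat \<Rightarrow> bool" where
  "psd A d \<longleftrightarrow> A \<in> carrier_mat d d \<and> A\<^sup>T = A \<and> (\<forall>v \<in> carrier_vec d. 0 \<le> v \<bullet> (A *\<^sub>v v))"

lemma psd_CS:
  assumes p: "psd A d" and u: "u \<in> carrier_vec d" and w: "w \<in> carrier_vec d"
  shows "(w \<bullet> (A *\<^sub>v u))^2 \<le> (u \<bullet> (A *\<^sub>v u)) * (w \<bullet> (A *\<^sub>v w))"
proof (rule real_quad)
  have A: "A \<in> carrier_mat d d" and s: "A\<^sup>T = A" and nn: "\<And>v. v \<in> carrier_vec d \<Longrightarrow> 0 \<le> v \<bullet> (A *\<^sub>v v)"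
    using p unfolding psd_def by auto
  show "0 \<le> u \<bullet> (A *\<^sub>v u) + 2 * (w \<bullet> (A *\<^sub>v u)) * t + (w \<bullet> (A *\<^sub>v w)) * t^2" for t
    using nn[of "u + t \<cdot>\<^sub>v w"] quad_expand[OF A s u w, of t] u w by (simp add: algebra_simps)
  show "0 \<le> w \<bullet> (A *\<^sub>v w)" using nn w by simp
qed

lemma self_dot_nonneg: "0 \<le> (v :: real vec) \<bullet> v"
  unfolding scalar_prod_def by (intro sum_nonneg) auto

lemma self_dot_zero:
  assumes v: "(v :: real vec) \<in> carrier_vec d" and z: "v \<bullet> v = 0"
  shows "v = 0\<^sub>v d"
proof (rule eq_vecI)
  show "dim_vec v = dim_vec (0\<^sub>v d)" using v by simp
  fix i assume "i < dim_vec (0\<^sub>v d)"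
  hence i: "i \<in> {0..<dim_vec v}" using v by simp
  have "\<forall>j\<in>{0..<dim_vec v}. v $ j * v $ j = 0"
    using z unfolding scalar_prod_def by (subst sum_nonneg_eq_0_iff[symmetric]) auto
  thus "v $ i = 0\<^sub>v d $ i" using i v by auto
qed

lemma psd_kernel:
  assumes p: "psd A d" and u: "u \<in> carrier_vec d" and z: "u \<bullet> (A *\<^sub>v u) = 0"
  shows "A *\<^sub>v u = 0\<^sub>v d"
proof -
  have A: "A \<in> carrier_mat d d" and s: "A\<^sup>T = A" using p unfolding psd_def by auto
  define w where "w = A *\<^sub>v u"
  have w: "w \<in> carrier_vec d" unfolding w_def by (rule mult_mat_vec_carrier[OF A u])
  from psd_CS[OF p u w] z have "(w \<bullet> w)^2 \<le> 0" unfolding w_def by simp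
  hence "w \<bullet> w = 0" by simp
  thus ?thesis using self_dot_zero[OF w] unfolding w_def by simp
qed

lemma psd_contr:
  assumes p: "psd A d" and r: "\<And>v. v \<in> carrier_vec d \<Longrightarrow> v \<bullet> (A *\<^sub>v v) \<le> r * (v \<bullet> v)"
    and v: "v \<in> carrier_vec d" and r0: "r \<ge> 0"
  shows "(A *\<^sub>v v) \<bullet> (A *\<^sub>v v) \<le> r^2 * (v \<bullet> v)"
proof -
  have A: "A \<in> carrier_mat d d" and s: "A\<^sup>T = A" using p unfolding psd_def by auto
  define w where "w = A *\<^sub>v v"
  have w: "w \<in> carrier_vec d" unfolding w_def by (rule mult_mat_vec_carrier[OF A v])
  have "(w \<bullet> w)^2 = (w \<bullet> (A *\<^sub>v v))^2" unfolding w_def by simp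
  also have "\<dots> \<le> (v \<bullet> (A *\<^sub>v v)) * (w \<bullet> (A *\<^sub>v w))" by (rule psd_CS[OF p v w])
  also have "\<dots> \<le> (r * (v \<bullet> v)) * (r * (w \<bullet> w))"
    using p v w r[OF v] r[OF w] r0 self_dot_nonneg[of v] self_dot_nonneg[of w] unfolding psd_def
    by (intro mult_mono) auto
  finally have le: "(w \<bullet> w)^2 \<le> r^2 * (v \<bullet> v) * (w \<bullet> w)" by (simp add: power2_eq_square algebra_simps)
  show ?thesis
  proof (cases "w \<bullet> w = 0")
    case True thus ?thesis using self_dot_nonneg[of v] unfolding w_def by simp
  next
    case False
    hence "w \<bullet> w > 0" using self_dot_nonneg[of w] by simp
    with le have "w \<bullet> w \<le> r^2 * (v \<bullet> v)" by (simp add: power2_eq_square)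
    thus ?thesis unfolding w_def .
  qed
qed

lemma quadform_sum:
  fixes A :: "real mat"
  assumes A: "A \<in> carrier_mat d d"
  shows "vec d f \<bullet> (A *\<^sub>v vec d f) = (\<Sum>i<d. f i * (\<Sum>j<d. A $$ (i,j) * f j))"
  using A unfolding scalar_prod_def
  by (auto simp: atLeast0LessThan row_def scalar_prod_def intro!: sum.cong)

lemma normsq_sum: "vec d (f :: nat \<Rightarrow> real) \<bullet> vec d f = (\<Sum>i<d. (f i)^2)"
  unfolding scalar_prod_def atLeast0LessThan by (intro sum.cong) (auto simp: power2_eq_square)

lemma smult_one_mat_vec:
  assumes v: "(v :: real vec) \<in> carrier_vec d"
  shows "(m \<cdot>\<^sub>m 1\<^sub>m d) *\<^sub>v v = m \<cdot>\<^sub>v v"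
  by (intro eq_vecI) (use v in auto)

lemma rayleigh_min:
  fixes A :: "real mat"
  assumes A: "A \<in> carrier_mat d d" and s: "A\<^sup>T = A" and d: "d \<ge> 1"
  shows "\<exists>m. eigenvalue A m \<and> (\<forall>v \<in> carrier_vec d. m * (v \<bullet> v) \<le> v \<bullet> (A *\<^sub>v v))"
proof -
  define g where "g = (\<lambda>f :: nat \<Rightarrow> real. \<Sum>i<d. f i * (\<Sum>j<d. A $$ (i,j) * f j))"
  have "continuous_on UNIV g" unfolding g_def
    by (intro continuous_on_sum continuous_on_mult continuous_on_const continuous_on_product_coordinates)
  from sphere_min_attain[OF d this] obtain f0 where f0z: "\<forall>i\<ge>d. f0 i = 0"
    and f0n: "(\<Sum>i<d. (f0 i)^2) = 1"
    and f0m: "\<And>h. (\<forall>i\<ge>d. h i = 0) \<and> (\<Sum>i<d. (h i)^2) = 1 \<Longrightarrow> g f0 \<le> g h" by blast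
  define m where "m = g f0"
  define u0 where "u0 = vec d f0"
  have u0: "u0 \<in> carrier_vec d" unfolding u0_def by simp
  have u0n: "u0 \<bullet> u0 = 1" unfolding u0_def normsq_sum using f0n .
  have u0m: "u0 \<bullet> (A *\<^sub>v u0) = m" unfolding u0_def m_def g_def quadform_sum[OF A] ..
  have ray: "m * (v \<bullet> v) \<le> v \<bullet> (A *\<^sub>v v)" if v: "v \<in> carrier_vec d" for v
  proof (cases "v \<bullet> v = 0")
    case True
    hence "v = 0\<^sub>v d" by (rule self_dot_zero[OF v])
    thus ?thesis using A by simp
  next
    case False
    hence vp: "v \<bullet> v > 0" using self_dot_nonneg[of v] by simp
    define sv where "sv = sqrt (v \<bullet> v)"
    have svp: "sv > 0" unfolding sv_def using vp by simp
    have sv2: "sv^2 = v \<bullet> v" unfolding sv_def using vp by simp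
    define h where "h = (\<lambda>i. if i < d then v $ i / sv else 0)"
    have vh: "vec d h = (1 / sv) \<cdot>\<^sub>v v" unfolding h_def by (intro eq_vecI) (use v in auto)
    have "(\<Sum>i<d. (h i)^2) = vec d h \<bullet> vec d h" by (rule normsq_sum[symmetric])
    also have "\<dots> = (1/sv) * (1/sv) * (v \<bullet> v)" unfolding vh using v by simp
    also have "\<dots> = 1" unfolding sv2[symmetric] using svp by (simp add: power2_eq_square field_simps)
    finally have hn: "(\<Sum>i<d. (h i)^2) = 1" .
    have "m \<le> g h" unfolding m_def by (rule f0m) (use hn in \<open>auto simp: h_def\<close>)
    also have "g h = vec d h \<bullet> (A *\<^sub>v vec d h)" unfolding g_def quadform_sum[OF A] ..
    also have "\<dots> = (1/sv) * (1/sv) * (v \<bullet> (A *\<^sub>v v))" unfolding vh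
      using v A by (simp add: mult_mat_vec[OF A v])
    finally have "m \<le> (v \<bullet> (A *\<^sub>v v)) / sv^2" by (simp add: power2_eq_square)
    hence "m \<le> (v \<bullet> (A *\<^sub>v v)) / (v \<bullet> v)" using sv2 by simp
    thus ?thesis using vp by (simp add: pos_le_divide_eq mult.commute)
  qed
  define B where "B = A - m \<cdot>\<^sub>m 1\<^sub>m d"
  have B: "B \<in> carrier_mat d d" unfolding B_def by (intro minus_carrier_mat smult_carrier_mat one_carrier_mat)
  have symA: "A $$ (j,i) = A $$ (i,j)" if "i < d" "j < d" for i j
  proof -
    have "A\<^sup>T $$ (i,j) = A $$ (j,i)" using A that by simp
    thus ?thesis using s by simp
  qed
  have Bv: "B *\<^sub>v v = A *\<^sub>v v - m \<cdot>\<^sub>v v" if v: "v \<in> carrier_vec d" for v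
    unfolding B_def using minus_mult_distrib_mat_vec[OF A _ v, of "m \<cdot>\<^sub>m 1\<^sub>m d"] smult_one_mat_vec[OF v]
    by simp
  have Bq: "v \<bullet> (B *\<^sub>v v) = v \<bullet> (A *\<^sub>v v) - m * (v \<bullet> v)" if v: "v \<in> carrier_vec d" for v
    unfolding Bv[OF v] using v A by (subst scalar_prod_minus_distrib[of _ d]) auto
  have Bs: "B\<^sup>T = B" unfolding B_def
    by (rule eq_matI) (use A symA in auto)
  have "psd B d" unfolding psd_def using B Bs Bq ray by auto
  from psd_kernel[OF this u0] Bq[OF u0] u0n u0m have "B *\<^sub>v u0 = 0\<^sub>v d" by simp
  hence z: "A *\<^sub>v u0 - m \<cdot>\<^sub>v u0 = 0\<^sub>v d" unfolding Bv[OF u0] .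
  have "A *\<^sub>v u0 = m \<cdot>\<^sub>v u0"
  proof (rule eq_vecI)
    fix i assume i: "i < dim_vec (m \<cdot>\<^sub>v u0)"
    hence id: "i < d" using u0 by simp
    have "(A *\<^sub>v u0 - m \<cdot>\<^sub>v u0) $ i = 0" unfolding z using id by simp
    thus "(A *\<^sub>v u0) $ i = (m \<cdot>\<^sub>v u0) $ i" using id A u0 by simp
  next
    show "dim_vec (A *\<^sub>v u0) = dim_vec (m \<cdot>\<^sub>v u0)" using A u0 by simp
  qed
  moreover have "u0 \<noteq> 0\<^sub>v d" using u0n u0 by auto
  ultimately have "eigenvalue A m" unfolding eigenvalue_def eigenvector_def using A u0 by auto
  with ray show ?thesis by blast
qed

lemma eigvec_quad:
  fixes A :: "real mat"
  assumes A: "A \<in> carrier_mat d d" and e: "eigenvalue A k"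
  shows "\<exists>w. w \<in> carrier_vec d \<and> w \<bullet> w > 0 \<and> w \<bullet> (A *\<^sub>v w) = k * (w \<bullet> w) \<and> A *\<^sub>v w = k \<cdot>\<^sub>v w"
proof -
  from e obtain w where w: "w \<in> carrier_vec d" "w \<noteq> 0\<^sub>v d" "A *\<^sub>v w = k \<cdot>\<^sub>v w"
    unfolding eigenvalue_def eigenvector_def using A by auto
  have "w \<bullet> w \<noteq> 0" using self_dot_zero[OF w(1)] w(2) by auto
  hence "w \<bullet> w > 0" using self_dot_nonneg[of w] by simp
  moreover have "w \<bullet> (A *\<^sub>v w) = k * (w \<bullet> w)" unfolding w(3) using w(1) by simp
  ultimately show ?thesis using w by blast
qed

lemma eig_finite:
  fixes A :: "real mat"
  assumes A: "A \<in> carrier_mat d d"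
  shows "finite {k. eigenvalue A k}"
proof -
  have "char_poly A \<noteq> 0" using degree_monic_char_poly[OF A] by auto
  hence "finite {k. poly (char_poly A) k = 0}" by (rule poly_roots_finite)
  thus ?thesis using eigenvalue_root_char_poly[OF A] by simp
qed

lemma eig_facts:
  fixes A :: "real mat"
  assumes A: "A \<in> carrier_mat d d" and s: "A\<^sup>T = A" and d: "d \<ge> 1"
  shows "eigenvalue A (lambda_min A) \<and> eigenvalue A (lambda_max A) \<and>
    (\<forall>v \<in> carrier_vec d. lambda_min A * (v \<bullet> v) \<le> v \<bullet> (A *\<^sub>v v) \<and> v \<bullet> (A *\<^sub>v v) \<le> lambda_max A * (v \<bullet> v))"
proof -
  obtain m where m1: "eigenvalue A m" and m2: "\<forall>v \<in> carrier_vec d. m * (v \<bullet> v) \<le> v \<bullet> (A *\<^sub>v v)"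
    using rayleigh_min[OF A s d] by blast
  have nA: "- A \<in> carrier_mat d d" using A by (rule uminus_carrier_mat)
  have ns: "(- A)\<^sup>T = - A" using s by (simp add: transpose_uminus)
  obtain m' where m'1: "eigenvalue (- A) m'" and m'2: "\<forall>v \<in> carrier_vec d. m' * (v \<bullet> v) \<le> v \<bullet> ((- A) *\<^sub>v v)"
    using rayleigh_min[OF nA ns d] by blast
  define M where "M = - m'"
  have neg: "v \<bullet> ((- A) *\<^sub>v v) = - (v \<bullet> (A *\<^sub>v v))" if v: "v \<in> carrier_vec d" for v
    using v A by simp
  have M2: "\<forall>v \<in> carrier_vec d. v \<bullet> (A *\<^sub>v v) \<le> M * (v \<bullet> v)"
    using m'2 neg unfolding M_def by fastforce
  obtain w where w: "w \<in> carrier_vec d" "w \<noteq> 0\<^sub>v d" "(- A) *\<^sub>v w = m' \<cdot>\<^sub>v w"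
    using m'1 nA unfolding eigenvalue_def eigenvector_def by auto
  have "A *\<^sub>v w = M \<cdot>\<^sub>v w"
  proof (rule eq_vecI)
    fix i assume i: "i < dim_vec (M \<cdot>\<^sub>v w)"
    hence id: "i < d" using w by simp
    have e: "- (A *\<^sub>v w) = m' \<cdot>\<^sub>v w" using w(3) uminus_mult_mat_vec[of w A] w(1) A by simp
    have "(- (A *\<^sub>v w)) $ i = (m' \<cdot>\<^sub>v w) $ i" using e by (rule arg_cong)
    hence "- ((A *\<^sub>v w) $ i) = m' * w $ i" using id A w(1) by simp
    thus "(A *\<^sub>v w) $ i = (M \<cdot>\<^sub>v w) $ i" using id w(1) unfolding M_def by simp
  next
    show "dim_vec (A *\<^sub>v w) = dim_vec (M \<cdot>\<^sub>v w)" using A w by simp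
  qed
  hence M1: "eigenvalue A M" unfolding eigenvalue_def eigenvector_def using A w by auto
  have fin: "finite {k. eigenvalue A k}" by (rule eig_finite[OF A])
  have bounds: "m \<le> k \<and> k \<le> M" if ek: "eigenvalue A k" for k
  proof -
    obtain u where u: "u \<in> carrier_vec d" "u \<bullet> u > 0" "u \<bullet> (A *\<^sub>v u) = k * (u \<bullet> u)"
      using eigvec_quad[OF A ek] by blast
    have "m * (u \<bullet> u) \<le> k * (u \<bullet> u)" "k * (u \<bullet> u) \<le> M * (u \<bullet> u)"
      using m2 M2 u by auto
    thus ?thesis using u(2) by (simp add: mult_le_cancel_right)
  qed
  have "lambda_min A = m" unfolding lambda_min_def
    by (rule Min_eqI[OF fin]) (use bounds m1 in auto)
  moreover have "lambda_max A = M" unfolding lambda_max_def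
    by (rule Max_eqI[OF fin]) (use bounds M1 in auto)
  ultimately show ?thesis using m1 M1 m2 M2 by auto
qed

lemma vnorm2_dot: "vnorm2 v = sqrt (v \<bullet> v)"
  unfolding vnorm2_def scalar_prod_def atLeast0LessThan by (simp add: power2_eq_square)

lemma spec_norm_eq:
  fixes A :: "real mat"
  assumes p: "psd A d" and e: "eigenvalue A M"
    and M: "\<And>v. v \<in> carrier_vec d \<Longrightarrow> v \<bullet> (A *\<^sub>v v) \<le> M * (v \<bullet> v)" and M0: "M \<ge> 0"
  shows "spec_norm A = M"
proof -
  have A: "A \<in> carrier_mat d d" using p unfolding psd_def by auto
  obtain w where w: "w \<in> carrier_vec d" "w \<bullet> w > 0" "A *\<^sub>v w = M \<cdot>\<^sub>v w"
    using eigvec_quad[OF A e] by blast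
  define u where "u = (1 / sqrt (w \<bullet> w)) \<cdot>\<^sub>v w"
  have u: "u \<in> carrier_vec d" unfolding u_def using w by simp
  have uu: "u \<bullet> u = 1" unfolding u_def using w by simp
  have Au: "A *\<^sub>v u = M \<cdot>\<^sub>v u" unfolding u_def using w mult_mat_vec[OF A w(1)] by (simp add: smult_smult_assoc mult.commute)
  have mem: "M \<in> {vnorm2 (A *\<^sub>v v) | v. v \<in> carrier_vec (dim_col A) \<and> vnorm2 v = 1}"
  proof -
    have "vnorm2 (A *\<^sub>v u) = sqrt (M * M * (u \<bullet> u))" unfolding vnorm2_dot Au using u by simp
    also have "\<dots> = M" using uu M0 by simp
    finally show ?thesis using u uu A unfolding vnorm2_dot by (intro CollectI exI[of _ u]) auto
  qed
  have ub: "x \<le> M" if xm: "x \<in> {vnorm2 (A *\<^sub>v v) | v. v \<in> carrier_vec (dim_col A) \<and> vnorm2 v = 1}" for x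
  proof -
    have dc: "dim_col A = d" using A by simp
    obtain v where v: "v \<in> carrier_vec d" "vnorm2 v = 1" "x = vnorm2 (A *\<^sub>v v)" using xm unfolding dc by auto
    have vv: "v \<bullet> v = 1" using v(2) self_dot_nonneg[of v] unfolding vnorm2_dot by simp
    have "(A *\<^sub>v v) \<bullet> (A *\<^sub>v v) \<le> M^2 * (v \<bullet> v)" by (rule psd_contr[OF p M v(1) M0])
    hence "(A *\<^sub>v v) \<bullet> (A *\<^sub>v v) \<le> M^2" using vv by simp
    hence "sqrt ((A *\<^sub>v v) \<bullet> (A *\<^sub>v v)) \<le> sqrt (M^2)" by (rule real_sqrt_le_mono)
    thus ?thesis using v(3) M0 unfolding vnorm2_dot by simp
  qed
  show ?thesis unfolding spec_norm_def by (rule cSup_eq_maximum[OF mem ub])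
qed



lemma mult_entry:
  fixes A B :: "real mat"
  assumes "i < dim_row A" "j < dim_col B" "dim_row B = dim_col A"
  shows "(A * B) $$ (i,j) = (\<Sum>k<dim_col A. A $$ (i,k) * B $$ (k,j))"
  using assms unfolding index_mult_mat(1)[OF assms(1,2)] scalar_prod_def
  by (auto simp: atLeast0LessThan intro!: sum.cong)

definition Pmat :: "nat \<Rightarrow> real mat" where
  "Pmat d = four_block_mat (1\<^sub>m d) (0\<^sub>m d 1) (0\<^sub>m 1 d) (0\<^sub>m 1 1)"

lemma Pmat_entry:
  assumes "l < d+1" "j < d+1"
  shows "Pmat d $$ (l,j) = (if l < d \<and> l = j then 1 else 0)"
  using assms unfolding Pmat_def by (auto simp: index_mat_four_block)

lemma Pmat_dims: "dim_row (Pmat d) = d+1" "dim_col (Pmat d) = d+1"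
  unfolding Pmat_def by auto

lemma attn_entry:
  fixes Z :: "real mat"
  assumes Z: "Z \<in> carrier_mat (n+1) (d+1)" and i: "i < n+1" and j: "j < d+1"
  shows "Attn Z (1\<^sub>m (d+1)) (Pmat d) $$ (i,j) =
    (if i = n \<and> j < d then (\<Sum>k<n. (\<Sum>l<d+1. Z $$ (n,l) * Z $$ (k,l)) * Z $$ (k,j)) else 0)"
    and "dim_row (Attn Z (1\<^sub>m (d+1)) (Pmat d)) = n+1" "dim_col (Attn Z (1\<^sub>m (d+1)) (Pmat d)) = d+1"
proof -
  have dr: "dim_row Z = n+1" and dc: "dim_col Z = d+1" using Z by auto
  define H where "H = hadamard (attn_mask (n+1)) (Z * Z\<^sup>T)"
  have G: "Z * 1\<^sub>m (d+1) * Z\<^sup>T = Z * Z\<^sup>T" using dc by simp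
  have AH: "Attn Z (1\<^sub>m (d+1)) (Pmat d) = H * Z * Pmat d" unfolding Attn_def G H_def dr ..
  have Hd: "dim_row H = n+1" "dim_col H = n+1" unfolding H_def hadamard_def attn_mask_def by auto
  have He: "H $$ (a,k) = (if a = n \<and> k < n then (\<Sum>l<d+1. Z $$ (n,l) * Z $$ (k,l)) else 0)"
    if "a < n+1" "k < n+1" for a k
  proof -
    have "(Z * Z\<^sup>T) $$ (a,k) = (\<Sum>l<d+1. Z $$ (a,l) * Z\<^sup>T $$ (l,k))"
      using mult_entry[of a Z k "Z\<^sup>T"] that dr dc by simp
    also have "\<dots> = (\<Sum>l<d+1. Z $$ (a,l) * Z $$ (k,l))"
      by (intro sum.cong) (use that dr dc in auto)
    finally have "(Z * Z\<^sup>T) $$ (a,k) = (\<Sum>l<d+1. Z $$ (a,l) * Z $$ (k,l))" .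
    thus ?thesis unfolding H_def hadamard_def attn_mask_def using that by auto
  qed
  have HZ: "(H * Z) $$ (a,l) = (if a = n then (\<Sum>k<n. (\<Sum>l'<d+1. Z $$ (n,l') * Z $$ (k,l')) * Z $$ (k,l)) else 0)"
    if "a < n+1" "l < d+1" for a l
  proof -
    have "(H * Z) $$ (a,l) = (\<Sum>k<n+1. H $$ (a,k) * Z $$ (k,l))"
      using mult_entry[of a H l Z] that dr dc Hd by simp
    also have "\<dots> = (\<Sum>k<n+1. (if a = n \<and> k < n then (\<Sum>l'<d+1. Z $$ (n,l') * Z $$ (k,l')) else 0) * Z $$ (k,l))"
      by (intro sum.cong) (use that He in auto)
    also have "\<dots> = (if a = n then (\<Sum>k<n. (\<Sum>l'<d+1. Z $$ (n,l') * Z $$ (k,l')) * Z $$ (k,l)) else 0)"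
      by (auto intro!: sum.cong)
    finally show ?thesis .
  qed
  have "(H * Z * Pmat d) $$ (i,j) = (\<Sum>l<d+1. (H * Z) $$ (i,l) * Pmat d $$ (l,j))"
    using mult_entry[of i "H * Z" j "Pmat d"] i j dr dc Hd Pmat_dims by simp
  also have "\<dots> = (\<Sum>l<d+1. (H * Z) $$ (i,l) * (if l < d \<and> l = j then 1 else 0))"
    by (intro sum.cong) (use j Pmat_entry in auto)
  also have "\<dots> = (if j < d then (H * Z) $$ (i,j) else 0)"
    using j by (auto simp: if_distrib cong: if_cong)
  also have "\<dots> = (if i = n \<and> j < d then (\<Sum>k<n. (\<Sum>l<d+1. Z $$ (n,l) * Z $$ (k,l)) * Z $$ (k,j)) else 0)"
    using HZ[OF i] j by auto
  finally show "Attn Z (1\<^sub>m (d+1)) (Pmat d) $$ (i,j) =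
    (if i = n \<and> j < d then (\<Sum>k<n. (\<Sum>l<d+1. Z $$ (n,l) * Z $$ (k,l)) * Z $$ (k,j)) else 0)"
    unfolding AH .
  show "dim_row (Attn Z (1\<^sub>m (d+1)) (Pmat d)) = n+1" "dim_col (Attn Z (1\<^sub>m (d+1)) (Pmat d)) = d+1"
    unfolding AH using Hd Pmat_dims by auto
qed

fun qseq :: "real mat \<Rightarrow> real \<Rightarrow> real \<Rightarrow> real vec \<Rightarrow> nat \<Rightarrow> real vec" where
  "qseq A eta a th 0 = 0\<^sub>v (dim_vec th)"
| "qseq A eta a th (Suc t) = qseq A eta a th t - eta \<cdot>\<^sub>v (A *\<^sub>v (qseq A eta a th t + a \<cdot>\<^sub>v th))"

lemma mv_entry:
  fixes X :: "real mat"
  assumes X: "X \<in> carrier_mat n d" and v: "v \<in> carrier_vec d" and k: "k < n"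
  shows "(X *\<^sub>v v) $ k = (\<Sum>l<d. X $$ (k,l) * v $ l)"
  using X v k unfolding index_mult_mat_vec[of k X v, OF k[folded carrier_matD(1)[OF X]]] scalar_prod_def
  by (auto simp: atLeast0LessThan intro!: sum.cong)

lemma loop_shape:
  fixes X :: "real mat" and \<theta> :: "real vec" and \<alpha> eta :: real
  assumes X: "X \<in> carrier_mat n d" and th: "\<theta> \<in> carrier_vec d"
  defines "Z0 \<equiv> four_block_mat X (mat_of_cols n [X *\<^sub>v \<theta>]) (0\<^sub>m 1 d) (mat 1 1 (\<lambda>_. \<alpha>))"
  defines "Zt \<equiv> loopZ (\<lambda>_. eta) (1\<^sub>m (d+1)) (Pmat d) Z0"
  shows "Zt t \<in> carrier_mat (n+1) (d+1) \<and> (\<forall>i<n. \<forall>j<d+1. Zt t $$ (i,j) = Z0 $$ (i,j)) \<and>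
    Zt t $$ (n,d) = \<alpha> \<and> qseq (X\<^sup>T * X) eta \<alpha> \<theta> t \<in> carrier_vec d \<and>
    (\<forall>j<d. Zt t $$ (n,j) = qseq (X\<^sup>T * X) eta \<alpha> \<theta> t $ j)"
proof (induction t)
  case 0
  have "Z0 \<in> carrier_mat (n+1) (d+1)" unfolding Z0_def using X by (intro four_block_carrier_mat) auto
  moreover have "Z0 $$ (n,d) = \<alpha>" unfolding Z0_def using X by simp
  moreover have "Z0 $$ (n,j) = 0" if "j < d" for j unfolding Z0_def using X that by simp
  ultimately show ?case unfolding Zt_def using th by auto
next
  case (Suc t)
  define Z where "Z = Zt t"
  define q where "q = qseq (X\<^sup>T * X) eta \<alpha> \<theta> t"
  have Z: "Z \<in> carrier_mat (n+1) (d+1)" and Zd: "\<forall>i<n. \<forall>j<d+1. Z $$ (i,j) = Z0 $$ (i,j)"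
    and Zl: "Z $$ (n,d) = \<alpha>" and q: "q \<in> carrier_vec d" and Zq: "\<forall>j<d. Z $$ (n,j) = q $ j"
    using Suc.IH unfolding Z_def q_def by auto
  have Z0X: "Z0 $$ (k,l) = X $$ (k,l)" if "k < n" "l < d" for k l unfolding Z0_def using X that by simp
  have Z0y: "Z0 $$ (k,d) = (X *\<^sub>v \<theta>) $ k" if "k < n" for k unfolding Z0_def using X that by (simp add: mat_of_cols_def)
  define e where "e = q + \<alpha> \<cdot>\<^sub>v \<theta>"
  have e: "e \<in> carrier_vec d" unfolding e_def using q th by simp
  have inner: "(\<Sum>l<d+1. Z $$ (n,l) * Z $$ (k,l)) = (X *\<^sub>v e) $ k" if k: "k < n" for k
  proof -
    have "(\<Sum>l<d+1. Z $$ (n,l) * Z $$ (k,l)) = (\<Sum>l<d. q $ l * X $$ (k,l)) + \<alpha> * (X *\<^sub>v \<theta>) $ k"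
      using Zd Zl Zq Z0X Z0y k by simp
    also have "(X *\<^sub>v \<theta>) $ k = (\<Sum>l<d. X $$ (k,l) * \<theta> $ l)" by (rule mv_entry[OF X th k])
    also have "(\<Sum>l<d. q $ l * X $$ (k,l)) + \<alpha> * (\<Sum>l<d. X $$ (k,l) * \<theta> $ l) = (\<Sum>l<d. X $$ (k,l) * e $ l)"
      unfolding e_def sum_distrib_left sum.distrib[symmetric] using q th
      by (intro sum.cong) (auto simp: algebra_simps)
    also have "\<dots> = (X *\<^sub>v e) $ k" by (rule mv_entry[OF X e k, symmetric])
    finally show ?thesis .
  qed
  have Ae: "(\<Sum>k<n. (\<Sum>l<d+1. Z $$ (n,l) * Z $$ (k,l)) * Z $$ (k,j)) = ((X\<^sup>T * X) *\<^sub>v e) $ j"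
    if j: "j < d" for j
  proof -
    have "(\<Sum>k<n. (\<Sum>l<d+1. Z $$ (n,l) * Z $$ (k,l)) * Z $$ (k,j)) = (\<Sum>k<n. X\<^sup>T $$ (j,k) * (X *\<^sub>v e) $ k)"
      using inner Zd Z0X j X by (intro sum.cong) auto
    also have "\<dots> = (X\<^sup>T *\<^sub>v (X *\<^sub>v e)) $ j"
      by (rule mv_entry[symmetric]) (use X e j in auto)
    also have "\<dots> = ((X\<^sup>T * X) *\<^sub>v e) $ j" using X e by simp
    finally show ?thesis .
  qed
  define Z' where "Z' = Z - eta \<cdot>\<^sub>m Attn Z (1\<^sub>m (d+1)) (Pmat d)"
  have Z'eq: "Zt (Suc t) = Z'" unfolding Zt_def Z'_def Z_def by simp
  have ad: "dim_row (Attn Z (1\<^sub>m (d+1)) (Pmat d)) = n+1" "dim_col (Attn Z (1\<^sub>m (d+1)) (Pmat d)) = d+1"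
    using attn_entry(2,3)[OF Z] by auto
  have Z'e: "Z' $$ (i,j) = Z $$ (i,j) - eta * (if i = n \<and> j < d then (\<Sum>k<n. (\<Sum>l<d+1. Z $$ (n,l) * Z $$ (k,l)) * Z $$ (k,j)) else 0)"
    if "i < n+1" "j < d+1" for i j
    unfolding Z'_def using that ad attn_entry(1)[OF Z that] by simp
  have Z'c: "Z' \<in> carrier_mat (n+1) (d+1)" unfolding Z'_def
    by (intro minus_carrier_mat smult_carrier_mat carrier_matI ad)
  have qS: "qseq (X\<^sup>T * X) eta \<alpha> \<theta> (Suc t) = q - eta \<cdot>\<^sub>v ((X\<^sup>T * X) *\<^sub>v e)"
    unfolding q_def e_def by simp
  have XX: "X\<^sup>T * X \<in> carrier_mat d d" using X by (intro mult_carrier_mat[of _ d n]) auto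
  have qSc: "qseq (X\<^sup>T * X) eta \<alpha> \<theta> (Suc t) \<in> carrier_vec d" unfolding qS
    by (intro minus_carrier_vec q) (simp add: mult_mat_vec_carrier[OF XX e])
  show ?case unfolding Z'eq
  proof (intro conjI allI impI)
    show "Z' \<in> carrier_mat (n+1) (d+1)" by (rule Z'c)
    show "Z' $$ (i,j) = Z0 $$ (i,j)" if "i < n" "j < d+1" for i j
      using Z'e[of i j] that Zd by simp
    show "Z' $$ (n,d) = \<alpha>" using Z'e[of n d] Zl by simp
    show "qseq (X\<^sup>T * X) eta \<alpha> \<theta> (Suc t) \<in> carrier_vec d" by (rule qSc)
    show "Z' $$ (n,j) = qseq (X\<^sup>T * X) eta \<alpha> \<theta> (Suc t) $ j" if "j < d" for j
      using Z'e[of n j] that Ae[OF that] Zq unfolding qS using q X by simp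
  qed
qed


lemma smult_mat_vec:
  fixes A :: "real mat"
  assumes A: "A \<in> carrier_mat nr nc" and v: "v \<in> carrier_vec nc"
  shows "(k \<cdot>\<^sub>m A) *\<^sub>v v = k \<cdot>\<^sub>v (A *\<^sub>v v)"
proof (rule eq_vecI)
  fix i assume "i < dim_vec (k \<cdot>\<^sub>v (A *\<^sub>v v))"
  hence i: "i < nr" using A by simp
  have r: "row A i \<in> carrier_vec nc" using A i by simp
  show "((k \<cdot>\<^sub>m A) *\<^sub>v v) $ i = (k \<cdot>\<^sub>v (A *\<^sub>v v)) $ i"
    using A i smult_scalar_prod_distrib[OF r v, of k] by simp
next
  show "dim_vec ((k \<cdot>\<^sub>m A) *\<^sub>v v) = dim_vec (k \<cdot>\<^sub>v (A *\<^sub>v v))" by simp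
qed

lemma sym_entry:
  fixes A :: "real mat"
  assumes A: "A \<in> carrier_mat d d" and s: "A\<^sup>T = A" and "i < d" "j < d"
  shows "A $$ (j,i) = A $$ (i,j)"
proof -
  have "A\<^sup>T $$ (i,j) = A $$ (j,i)" using A assms(3,4) by simp
  thus ?thesis using s by simp
qed

lemma qseq_carrier:
  fixes A :: "real mat"
  assumes A: "A \<in> carrier_mat d d" and th: "\<theta> \<in> carrier_vec d"
  shows "qseq A eta a \<theta> t \<in> carrier_vec d"
proof (induction t)
  case 0 thus ?case using th by simp
next
  case (Suc t)
  have "A *\<^sub>v (qseq A eta a \<theta> t + a \<cdot>\<^sub>v \<theta>) \<in> carrier_vec d"
    by (rule mult_mat_vec_carrier[OF A]) (use Suc th in simp)
  thus ?case using Suc by simp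
qed

lemma main_bound:
  fixes n d T :: nat and X :: "real mat" and \<theta> :: "real vec" and \<alpha> :: real
  assumes "n > d" and d1: "d \<ge> 1"
    and X: "X \<in> carrier_mat n d"
    and inv: "invertible_mat (X\<^sup>T * X)"
    and th: "\<theta> \<in> carrier_vec d" and thn: "vnorm2 \<theta> = 1"
    and "\<alpha> \<noteq> 0"
    and "T \<ge> 1"
  shows "(let y = X *\<^sub>v \<theta>;
              Z0 = four_block_mat X (mat_of_cols n [y]) (0\<^sub>m 1 d) (mat 1 1 (\<lambda>_. \<alpha>));
              Q = 1\<^sub>m (d+1);
              P = four_block_mat (1\<^sub>m d) (0\<^sub>m d 1) (0\<^sub>m 1 d) (0\<^sub>m 1 1);
              L = spec_norm (X\<^sup>T * X);
              \<kappa> = lambda_max (X\<^sup>T * X) / lambda_min (X\<^sup>T * X)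
          in \<bar>TF (\<lambda>_. 1 / L) T Q P Z0 \<bullet> \<theta> - \<alpha>\<bar> \<le> \<bar>\<alpha>\<bar> * exp (- real T / (2 * \<kappa>)))"
proof -
  define A where "A = X\<^sup>T * X"
  have A: "A \<in> carrier_mat d d" unfolding A_def using X by (intro mult_carrier_mat[of _ d n]) auto
  have XT: "X\<^sup>T \<in> carrier_mat d n" using X by simp
  have As: "A\<^sup>T = A" unfolding A_def using transpose_mult[OF XT X] by simp
  have Aq: "v \<bullet> (A *\<^sub>v v) = (X *\<^sub>v v) \<bullet> (X *\<^sub>v v)" if v: "v \<in> carrier_vec d" for v
  proof -
    have Xv: "X *\<^sub>v v \<in> carrier_vec n" using X v by simp
    have "A *\<^sub>v v = X\<^sup>T *\<^sub>v (X *\<^sub>v v)" unfolding A_def using XT X v by simp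
    hence "v \<bullet> (A *\<^sub>v v) = (X\<^sup>T *\<^sub>v (X *\<^sub>v v)) \<bullet> v"
      using comm_scalar_prod[OF v, of "X\<^sup>T *\<^sub>v (X *\<^sub>v v)"] XT Xv by simp
    also have "\<dots> = (X *\<^sub>v v) \<bullet> (X *\<^sub>v v)" by (rule transpose_vec_mult_scalar[OF X v Xv])
    finally show ?thesis .
  qed
  have psdA: "psd A d" unfolding psd_def using A As Aq self_dot_nonneg by auto
  define m where "m = lambda_min A"
  define M where "M = lambda_max A"
  have ef: "eigenvalue A m" "eigenvalue A M"
    "\<And>v. v \<in> carrier_vec d \<Longrightarrow> m * (v \<bullet> v) \<le> v \<bullet> (A *\<^sub>v v) \<and> v \<bullet> (A *\<^sub>v v) \<le> M * (v \<bullet> v)"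
    using eig_facts[OF A As d1] unfolding m_def M_def by auto
  obtain w where w: "w \<in> carrier_vec d" "w \<bullet> w > 0" "w \<bullet> (A *\<^sub>v w) = m * (w \<bullet> w)" "A *\<^sub>v w = m \<cdot>\<^sub>v w"
    using eigvec_quad[OF A ef(1)] by blast
  have m0: "m \<ge> 0"
  proof -
    have "0 \<le> m * (w \<bullet> w)" using w(3) psdA w(1) unfolding psd_def by auto
    thus ?thesis using w(2) by (simp add: zero_le_mult_iff)
  qed
  have mne: "m \<noteq> 0"
  proof
    assume "m = 0"
    hence Aw: "A *\<^sub>v w = 0\<^sub>v d" using w(4) w(1) by auto
    from inv obtain B where B1: "A * B = 1\<^sub>m (dim_row A)" and B2: "B * A = 1\<^sub>m (dim_row B)"
      unfolding invertible_mat_def inverts_mat_def A_def[symmetric] by auto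
    have "dim_col (B * A) = d" using A by simp
    hence drB: "dim_row B = d" using B2 by simp
    have "dim_col (A * B) = dim_row A" using B1 by simp
    hence dcB: "dim_col B = d" using A by simp
    have Bc: "B \<in> carrier_mat d d" using drB dcB by auto
    have "w = 1\<^sub>m d *\<^sub>v w" using w(1) by simp
    also have "\<dots> = (B * A) *\<^sub>v w" using B2 drB by simp
    also have "\<dots> = B *\<^sub>v (A *\<^sub>v w)" using Bc A w(1) by simp
    also have "\<dots> = 0\<^sub>v d" unfolding Aw
    proof (rule eq_vecI)
      fix i assume "i < dim_vec (0\<^sub>v d :: real vec)"
      hence i: "i < d" by simp
      have "row B i \<in> carrier_vec d" using Bc i by simp
      thus "(B *\<^sub>v 0\<^sub>v d) $ i = 0\<^sub>v d $ i" using Bc i by simp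
    qed (use Bc in simp)
    finally have "w \<bullet> w = 0" by simp
    thus False using w(2) by simp
  qed
  have mp: "m > 0" using m0 mne by simp
  have "m * (w \<bullet> w) \<le> M * (w \<bullet> w)" using ef(3)[OF w(1)] by linarith
  hence mM: "m \<le> M" using w(2) by (rule mult_right_le_imp_le)
  have Mp: "M > 0" using mp mM by simp
  have L: "spec_norm A = M"
    by (rule spec_norm_eq[OF psdA ef(2)]) (use ef(3) Mp in auto)
  define eta where "eta = 1 / M"
  define r where "r = 1 - m / M"
  have r0: "r \<ge> 0" unfolding r_def using mM Mp by simp
  define B where "B = 1\<^sub>m d - eta \<cdot>\<^sub>m A"
  have Bc: "B \<in> carrier_mat d d" unfolding B_def by (intro minus_carrier_mat smult_carrier_mat A)
  have Bv: "B *\<^sub>v v = v - eta \<cdot>\<^sub>v (A *\<^sub>v v)" if v: "v \<in> carrier_vec d" for v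
    unfolding B_def using minus_mult_distrib_mat_vec[OF one_carrier_mat smult_carrier_mat[OF A] v]
      smult_mat_vec[OF A v] v by simp
  have Bq: "v \<bullet> (B *\<^sub>v v) = v \<bullet> v - eta * (v \<bullet> (A *\<^sub>v v))" if v: "v \<in> carrier_vec d" for v
  proof -
    have Av: "A *\<^sub>v v \<in> carrier_vec d" using A v by simp
    show ?thesis unfolding Bv[OF v]
      using scalar_prod_minus_distrib[OF v v smult_carrier_vec[THEN iffD2, OF Av]]
        scalar_prod_smult_distrib[OF v Av] by simp
  qed
  have Bs: "B\<^sup>T = B" unfolding B_def
    by (rule eq_matI) (use A sym_entry[OF A As] in auto)
  have etap: "eta > 0" unfolding eta_def using Mp by simp
  have psdB: "psd B d" unfolding psd_def
  proof (intro conjI ballI Bc Bs)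
    fix v :: "real vec" assume v: "v \<in> carrier_vec d"
    have "eta * (v \<bullet> (A *\<^sub>v v)) \<le> eta * (M * (v \<bullet> v))" using ef(3)[OF v] etap by simp
    also have "\<dots> = v \<bullet> v" unfolding eta_def using Mp by simp
    finally show "0 \<le> v \<bullet> (B *\<^sub>v v)" unfolding Bq[OF v] by simp
  qed
  have Br: "v \<bullet> (B *\<^sub>v v) \<le> r * (v \<bullet> v)" if v: "v \<in> carrier_vec d" for v
  proof -
    have "eta * (m * (v \<bullet> v)) \<le> eta * (v \<bullet> (A *\<^sub>v v))" using ef(3)[OF v] etap by simp
    moreover have "eta * (m * (v \<bullet> v)) = (m / M) * (v \<bullet> v)" unfolding eta_def by simp
    ultimately show ?thesis unfolding Bq[OF v] r_def by (simp add: algebra_simps)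
  qed
  have thth: "\<theta> \<bullet> \<theta> = 1" using thn self_dot_nonneg[of \<theta>] unfolding vnorm2_dot by simp
  define e where "e = (\<lambda>t. qseq A eta \<alpha> \<theta> t + \<alpha> \<cdot>\<^sub>v \<theta>)"
  have ec: "e t \<in> carrier_vec d" for t unfolding e_def using qseq_carrier[OF A th] th by simp
  have eS: "e (Suc t) = B *\<^sub>v e t" for t
  proof -
    have q: "qseq A eta \<alpha> \<theta> t \<in> carrier_vec d" by (rule qseq_carrier[OF A th])
    have Ae: "A *\<^sub>v e t \<in> carrier_vec d" using A ec[of t] by simp
    show ?thesis unfolding Bv[OF ec]
      by (rule eq_vecI) (use q th Ae carrier_matD[OF A] carrier_vecD[OF q] carrier_vecD[OF th] carrier_vecD[OF Ae] in \<open>auto simp: e_def algebra_simps\<close>)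
  qed
  have ebound: "e t \<bullet> e t \<le> r^(2*t) * \<alpha>^2" for t
  proof (induction t)
    case 0
    have "e 0 = \<alpha> \<cdot>\<^sub>v \<theta>" unfolding e_def using th by simp
    thus ?case using th thth by (simp add: power2_eq_square)
  next
    case (Suc t)
    have "e (Suc t) \<bullet> e (Suc t) \<le> r^2 * (e t \<bullet> e t)" unfolding eS by (rule psd_contr[OF psdB Br ec r0])
    also have "\<dots> \<le> r^2 * (r^(2*t) * \<alpha>^2)" using Suc r0 by (intro mult_left_mono) auto
    also have "\<dots> = r^(2 * Suc t) * \<alpha>^2" by (simp add: power_add power_mult power2_eq_square)
    finally show ?case .
  qed
  have psd1: "psd (1\<^sub>m d) d" unfolding psd_def using self_dot_nonneg by auto
  have CS: "(e T \<bullet> \<theta>)^2 \<le> (e T \<bullet> e T) * (\<theta> \<bullet> \<theta>)"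
    using psd_CS[OF psd1 ec[of T] th] ec[of T] th comm_scalar_prod[OF th ec[of T]] by simp
  have "(e T \<bullet> \<theta>)^2 \<le> (r^T * \<alpha>)^2"
    using CS ebound[of T] thth by (simp add: power_mult_distrib power_mult[symmetric] mult.commute)
  hence eth: "\<bar>e T \<bullet> \<theta>\<bar> \<le> r^T * \<bar>\<alpha>\<bar>"
    using abs_le_square_iff[of "e T \<bullet> \<theta>" "r^T * \<alpha>"] r0 by (simp add: abs_mult)
  have rexp: "r^T \<le> exp (- real T / (2 * (M / m)))"
  proof -
    have "r \<le> exp (- (m / M))" unfolding r_def using exp_ge_add_one_self[of "- (m / M)"] by simp
    hence "r^T \<le> exp (- (m / M)) ^ T" by (rule power_mono[OF _ r0])
    also have "\<dots> = exp (real T * (- (m / M)))" by (rule exp_of_nat_mult[symmetric])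
    also have "\<dots> \<le> exp (- real T / (2 * (M / m)))"
    proof -
      have "real T * (m / M) \<ge> 0" using mp Mp by simp
      hence "real T * (- (m / M)) \<le> - real T / (2 * (M / m))"
        using mp Mp by (simp add: field_simps)
      thus ?thesis by simp
    qed
    finally show ?thesis .
  qed
  define Z0 where "Z0 = four_block_mat X (mat_of_cols n [X *\<^sub>v \<theta>]) (0\<^sub>m 1 d) (mat 1 1 (\<lambda>_. \<alpha>))"
  have Z0d: "dim_row Z0 = n+1" "dim_col Z0 = d+1" unfolding Z0_def using X by auto
  have sh: "\<forall>j<d. loopZ (\<lambda>_. eta) (1\<^sub>m (d+1)) (Pmat d) Z0 T $$ (n,j) = qseq A eta \<alpha> \<theta> T $ j"
    unfolding Z0_def A_def
    by (rule loop_shape[OF X th, where \<alpha>=\<alpha> and eta=eta and t=T, THEN conjunct2, THEN conjunct2, THEN conjunct2, THEN conjunct2])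
  have TFq: "TF (\<lambda>_. eta) T (1\<^sub>m (d+1)) (Pmat d) Z0 = - qseq A eta \<alpha> \<theta> T"
    unfolding TF_def Let_def Z0d using sh qseq_carrier[OF A th, of eta \<alpha> T]
    by (intro eq_vecI) auto
  have eT: "e T \<bullet> \<theta> = qseq A eta \<alpha> \<theta> T \<bullet> \<theta> + \<alpha>"
    unfolding e_def using add_scalar_prod_distrib[OF qseq_carrier[OF A th] smult_carrier_vec[THEN iffD2, OF th] th]
      smult_scalar_prod_distrib[OF th th] thth by simp
  have TFth: "TF (\<lambda>_. eta) T (1\<^sub>m (d+1)) (Pmat d) Z0 \<bullet> \<theta> - \<alpha> = - (e T \<bullet> \<theta>)"
    unfolding TFq eT using qseq_carrier[OF A th, of eta \<alpha> T] th by simp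
  have "\<bar>TF (\<lambda>_. eta) T (1\<^sub>m (d+1)) (Pmat d) Z0 \<bullet> \<theta> - \<alpha>\<bar> \<le> \<bar>\<alpha>\<bar> * exp (- real T / (2 * (M / m)))"
    unfolding TFth using eth rexp mult_right_mono[OF rexp, of "\<bar>\<alpha>\<bar>"] by (simp add: mult.commute)
  thus ?thesis unfolding Let_def Z0_def[symmetric] Pmat_def[symmetric] A_def[symmetric] L m_def[symmetric] M_def[symmetric]
    eta_def .
qed


theorem mainTheorem4:
  fixes n d T :: nat and X :: "real mat" and \<theta> :: "real vec" and \<alpha> :: real
  assumes "n > d" and "d \<ge> 1"
    and "X \<in> carrier_mat n d"
    and "invertible_mat (X\<^sup>T * X)"
    and "\<theta> \<in> carrier_vec d" and "vnorm2 \<theta> = 1"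
    and "\<alpha> \<noteq> 0"
    and "T \<ge> 1"
  shows "(let y = X *\<^sub>v \<theta>;
              Z0 = four_block_mat X (mat_of_cols n [y]) (0\<^sub>m 1 d) (mat 1 1 (\<lambda>_. \<alpha>));
              Q = 1\<^sub>m (d+1);
              P = four_block_mat (1\<^sub>m d) (0\<^sub>m d 1) (0\<^sub>m 1 d) (0\<^sub>m 1 1);
              L = spec_norm (X\<^sup>T * X);
              \<kappa> = lambda_max (X\<^sup>T * X) / lambda_min (X\<^sup>T * X)
          in \<bar>TF (\<lambda>_. 1 / L) T Q P Z0 \<bullet> \<theta> - \<alpha>\<bar> \<le> \<bar>\<alpha>\<bar> * exp (- real T / (2 * \<kappa>)))"
  using assms by (rule main_bound)

end
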